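(* Let $G\in\mathcal{F}$, let $C$ be a clique of maximum size in $G$ chosen among all maximum cliques so that the number of edges with exactly one endpoint in $C$ is minimal, and let $X,Y$ be a partition of the vertex set of $C$ into two nonempty sets such that every vertex outside $C$ has its set of neighbors in $C$ equal to $X$, $Y$ or $\emptyset$. Let $a=|X|$, $b=|Y|$, let $\Gamma X$ (resp. $\Gamma Y$) be the set of vertices outside $C$ whose neighborhood in $C$ is $X$ (resp. $Y$), and let $G[\Gamma X]$, $G[\Gamma Y]$ be the induced subgraphs. Then, for some nonnegative integers $l,k,m$: (i) if $b=1$ (resp. $a=1$), then $G[\Gamma X]=lK_1$ (resp. $G[\Gamma Y]=lK_1$); (ii) if $b=2$ (resp. $a=2$), then $G[\Gamma X]=lK_1\cup kK_2$ (resp. $G[\Gamma Y]=lK_1\cup kK_2$); (iii) if $b=3$ (resp. $a=3$), then $G[\Gamma X]=lK_1\cup kK_2\cup mK_3$ (resp. $G[\Gamma Y]=lK_1\cup kK_2\cup mK_3$); (iv) if $b\geq 4$ (resp. $a\geq 4$), then $G[\Gamma X]=lK_1\cup kK_2$ (resp. $G[\Gamma Y]=lK_1\cup kK_2$).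
   Context: Graphs are finite and simple; spectrum means adjacency spectrum. $\mathcal{F}$ denotes the set of connected graphs whose spectrum consists of exactly one eigenvalue $r>2$, exactly one eigenvalue $s<-1$, and all remaining eigenvalues (with multiplicity) equal to $2$ or $-1$. For such $G$ and $C$ a partition $X,Y$ as described exists. $lK_1\cup kK_2\cup mK_3$ denotes the disjoint union of $l$ isolated vertices, $k$ edges and $m$ triangles. *)

theory Defs
  imports "Jordan_Normal_Form.Char_Poly" "HOL-Library.Multiset"
begin

definition simple_graph :: "nat \<Rightarrow> (nat \<Rightarrow> nat \<Rightarrow> bool) \<Rightarrow> bool" where
  "simple_graph n E \<longleftrightarrow> (\<forall>u v. E u v \<longrightarrow> u < n \<and> v < n) \<and>
     (\<forall>u v. E u v \<longrightarrow> E v u) \<and> (\<forall>u. \<not> E u u)"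

definition connected_graph :: "nat \<Rightarrow> (nat \<Rightarrow> nat \<Rightarrow> bool) \<Rightarrow> bool" where
  "connected_graph n E \<longleftrightarrow> n \<ge> 1 \<and> (\<forall>u<n. \<forall>v<n. E\<^sup>*\<^sup>* u v)"

definition adj_matrix :: "nat \<Rightarrow> (nat \<Rightarrow> nat \<Rightarrow> bool) \<Rightarrow> real mat" where
  "adj_matrix n E = mat n n (\<lambda>(i,j). if E i j then 1 else 0)"

definition has_spectrum :: "nat \<Rightarrow> (nat \<Rightarrow> nat \<Rightarrow> bool) \<Rightarrow> real multiset \<Rightarrow> bool" where
  "has_spectrum n E M \<longleftrightarrow> char_poly (adj_matrix n E) = (\<Prod>x\<in>#M. [:-x, 1:])"

definition in_F :: "nat \<Rightarrow> (nat \<Rightarrow> nat \<Rightarrow> bool) \<Rightarrow> bool" where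
  "in_F n E \<longleftrightarrow> simple_graph n E \<and> connected_graph n E \<and>
     (\<exists>r s M. r > 2 \<and> s < -1 \<and> set_mset M \<subseteq> {2, -1} \<and>
        has_spectrum n E ({#r, s#} + M))"

definition is_clique :: "nat \<Rightarrow> (nat \<Rightarrow> nat \<Rightarrow> bool) \<Rightarrow> nat set \<Rightarrow> bool" where
  "is_clique n E C \<longleftrightarrow> C \<subseteq> {0..<n} \<and> (\<forall>u\<in>C. \<forall>v\<in>C. u \<noteq> v \<longrightarrow> E u v)"

definition max_clique :: "nat \<Rightarrow> (nat \<Rightarrow> nat \<Rightarrow> bool) \<Rightarrow> nat set \<Rightarrow> bool" where
  "max_clique n E C \<longleftrightarrow> is_clique n E C \<and> (\<forall>D. is_clique n E D \<longrightarrow> card D \<le> card C)"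

definition boundary_edges :: "nat \<Rightarrow> (nat \<Rightarrow> nat \<Rightarrow> bool) \<Rightarrow> nat set \<Rightarrow> nat" where
  "boundary_edges n E C = card {(u, v). u \<in> C \<and> v \<in> {0..<n} - C \<and> E u v}"

definition nbrs_in :: "(nat \<Rightarrow> nat \<Rightarrow> bool) \<Rightarrow> nat \<Rightarrow> nat set \<Rightarrow> nat set" where
  "nbrs_in E v S = {u \<in> S. E v u}"

definition Gamma :: "nat \<Rightarrow> (nat \<Rightarrow> nat \<Rightarrow> bool) \<Rightarrow> nat set \<Rightarrow> nat set \<Rightarrow> nat set" where
  "Gamma n E C X = {v \<in> {0..<n} - C. nbrs_in E v C = X}"

text \<open>The induced subgraph G[S] is isomorphic to l K1 \<union> k K2 \<union> m K3: S is partitioned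
  into l blocks of size 1, k of size 2 and m of size 3, each block a clique,
  no edges between distinct blocks.\<close>
definition is_lK1_kK2_mK3 ::
  "(nat \<Rightarrow> nat \<Rightarrow> bool) \<Rightarrow> nat set \<Rightarrow> nat \<Rightarrow> nat \<Rightarrow> nat \<Rightarrow> bool" where
  "is_lK1_kK2_mK3 E S l k m \<longleftrightarrow>
     (\<exists>P. finite P \<and> \<Union>P = S \<and> (\<forall>B\<in>P. \<forall>B'\<in>P. B \<noteq> B' \<longrightarrow> B \<inter> B' = {}) \<and>
        (\<forall>B\<in>P. card B \<in> {1, 2, 3} \<and> (\<forall>u\<in>B. \<forall>v\<in>B. u \<noteq> v \<longrightarrow> E u v)) \<and>
        (\<forall>B\<in>P. \<forall>B'\<in>P. B \<noteq> B' \<longrightarrow> (\<forall>u\<in>B. \<forall>v\<in>B'. \<not> E u v)) \<and>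
        card {B\<in>P. card B = 1} = l \<and> card {B\<in>P. card B = 2} = k \<and>
        card {B\<in>P. card B = 3} = m)"

end

theory Submission
  imports Defs "Jordan_Normal_Form.Schur_Decomposition"
begin


definition mvj :: "nat \<Rightarrow> real mat \<Rightarrow> (nat \<Rightarrow> real) \<Rightarrow> nat \<Rightarrow> real" where
  "mvj n M v = (\<lambda>i. \<Sum>j<n. M $$ (i,j) * v j)"
definition ipn :: "nat \<Rightarrow> (nat \<Rightarrow> real) \<Rightarrow> (nat \<Rightarrow> real) \<Rightarrow> real" where
  "ipn n v w = (\<Sum>i<n. v i * w i)"
definition Lop :: "nat \<Rightarrow> real mat \<Rightarrow> real \<Rightarrow> (nat \<Rightarrow> real) \<Rightarrow> nat \<Rightarrow> real" where
  "Lop n M e v = (\<lambda>i. mvj n M v i - e * v i)"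
fun chop :: "nat \<Rightarrow> real mat \<Rightarrow> real list \<Rightarrow> (nat \<Rightarrow> real) \<Rightarrow> nat \<Rightarrow> real" where
  "chop n M [] v = v"
| "chop n M (e # es) v = Lop n M e (chop n M es v)"

lemma mvj_cong: "(\<And>j. j < n \<Longrightarrow> v j = w j) \<Longrightarrow> mvj n M v = mvj n M w"
  unfolding mvj_def by (intro ext sum.cong) auto

lemma Lop_cong: assumes "\<And>j. j < n \<Longrightarrow> v j = w j" "i < n" shows "Lop n M e v i = Lop n M e w i"
proof -
  have "mvj n M v = mvj n M w" by (rule mvj_cong) (use assms in auto)
  then show ?thesis using assms(2) assms(1)[of i] by (simp add: Lop_def)
qed

lemma chop_cong: "(\<And>j. j < n \<Longrightarrow> v j = w j) \<Longrightarrow> i < n \<Longrightarrow> chop n M xs v i = chop n M xs w i"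
proof (induction xs arbitrary: i)
  case Nil then show ?case by simp
next
  case (Cons e xs)
  have "Lop n M e (chop n M xs v) i = Lop n M e (chop n M xs w) i"
    by (rule Lop_cong) (use Cons in auto)
  then show ?case by simp
qed

lemma mvj_lin: "mvj n M (\<lambda>i. a * v i + b * w i) = (\<lambda>i. a * mvj n M v i + b * mvj n M w i)"
  unfolding mvj_def by (simp add: sum.distrib sum_distrib_left distrib_left mult.left_commute)

lemma mvj_scale: "mvj n M (\<lambda>i. a * v i) = (\<lambda>i. a * mvj n M v i)"
  unfolding mvj_def by (simp add: sum_distrib_left mult.left_commute)

lemma mvj_add: "mvj n M (\<lambda>i. v i + w i) = (\<lambda>i. mvj n M v i + mvj n M w i)"
  unfolding mvj_def by (simp add: sum.distrib distrib_left)

lemma mvj_diff: "mvj n M (\<lambda>i. v i - w i) = (\<lambda>i. mvj n M v i - mvj n M w i)"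
  unfolding mvj_def by (simp add: sum_subtractf right_diff_distrib)

lemma mvj_zero: "mvj n M (\<lambda>i. 0) = (\<lambda>i. 0)"
  unfolding mvj_def by auto

lemma Lop_lin: "Lop n M e (\<lambda>i. a * v i + b * w i) = (\<lambda>i. a * Lop n M e v i + b * Lop n M e w i)"
  unfolding Lop_def mvj_lin by (simp add: algebra_simps)

lemma Lop_scale: "Lop n M e (\<lambda>i. a * v i) = (\<lambda>i. a * Lop n M e v i)"
  unfolding Lop_def mvj_scale by (simp add: algebra_simps)

lemma chop_lin: "chop n M xs (\<lambda>i. a * v i + b * w i) = (\<lambda>i. a * chop n M xs v i + b * chop n M xs w i)"
  by (induction xs) (auto simp: Lop_lin)

lemma chop_append: "chop n M (xs @ ys) v = chop n M xs (chop n M ys v)"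
  by (induction xs) auto

lemma Lop_comm: "Lop n M e (Lop n M f v) = Lop n M f (Lop n M e v)"
proof -
  have "Lop n M e (Lop n M f v) = (\<lambda>i. mvj n M (mvj n M v) i - f * mvj n M v i - e * (mvj n M v i - f * v i))"
    unfolding Lop_def mvj_diff mvj_scale by simp
  also have "\<dots> = Lop n M f (Lop n M e v)"
    unfolding Lop_def mvj_diff mvj_scale by (simp add: algebra_simps)
  finally show ?thesis .
qed

lemma chop_Lop_comm: "Lop n M e (chop n M xs v) = chop n M xs (Lop n M e v)"
  by (induction xs) (auto simp: Lop_comm)

lemma mvj_mult:
  assumes "X \<in> carrier_mat n n" "Y \<in> carrier_mat n n" "i < n"
  shows "mvj n (X * Y) v i = mvj n X (mvj n Y v) i"
proof -
  have "mvj n (X * Y) v i = (\<Sum>j<n. (\<Sum>k<n. X $$ (i,k) * Y $$ (k,j)) * v j)"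
    unfolding mvj_def using assms
    by (intro sum.cong refl) (auto simp: scalar_prod_def atLeast0LessThan)
  also have "\<dots> = (\<Sum>j<n. \<Sum>k<n. X $$ (i,k) * (Y $$ (k,j) * v j))"
    by (simp add: sum_distrib_right mult.assoc)
  also have "\<dots> = (\<Sum>k<n. \<Sum>j<n. X $$ (i,k) * (Y $$ (k,j) * v j))"
    by (rule sum.swap)
  also have "\<dots> = mvj n X (mvj n Y v) i"
    unfolding mvj_def by (simp add: sum_distrib_left)
  finally show ?thesis .
qed

lemma mvj_one: "i < n \<Longrightarrow> mvj n (1\<^sub>m n) v i = v i"
proof -
  assume i: "i < n"
  have "mvj n (1\<^sub>m n) v i = (\<Sum>j<n. (if i = j then v j else 0))"
    unfolding mvj_def using i by (intro sum.cong) auto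
  also have "\<dots> = v i" using i by (simp add: sum.delta)
  finally show ?thesis .
qed


lemma ipn_cong: "(\<And>i. i < n \<Longrightarrow> v i = v' i) \<Longrightarrow> (\<And>i. i < n \<Longrightarrow> w i = w' i) \<Longrightarrow> ipn n v w = ipn n v' w'"
  unfolding ipn_def by (intro sum.cong) auto

section \<open>Transfer along similarity\<close>

lemma transfer_Lop:
  assumes P: "P \<in> carrier_mat n n" and B: "B \<in> carrier_mat n n" and Q: "Q \<in> carrier_mat n n"
    and QP: "Q * P = 1\<^sub>m n" and A: "A = P * B * Q" and i: "i < n"
  shows "Lop n A e (mvj n P w) i = mvj n P (Lop n B e w) i"
proof -
  have PB: "P * B \<in> carrier_mat n n" using P B by auto
  have QPw: "mvj n Q (mvj n P w) j = w j" if "j < n" for j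
    using mvj_mult[OF Q P that, of w] QP mvj_one[OF that] by simp
  have "mvj n A (mvj n P w) i = mvj n (P * B) (mvj n Q (mvj n P w)) i"
    using A mvj_mult[OF PB Q i] by simp
  also have "\<dots> = mvj n P (mvj n B (mvj n Q (mvj n P w))) i"
    using mvj_mult[OF P B i] by simp
  also have "mvj n B (mvj n Q (mvj n P w)) = mvj n B w"
    by (rule mvj_cong) (use QPw in auto)
  finally have "mvj n A (mvj n P w) i = mvj n P (mvj n B w) i" .
  then show ?thesis
    unfolding Lop_def mvj_diff mvj_scale by simp
qed

lemma transfer_chop:
  assumes P: "P \<in> carrier_mat n n" and B: "B \<in> carrier_mat n n" and Q: "Q \<in> carrier_mat n n"
    and QP: "Q * P = 1\<^sub>m n" and A: "A = P * B * Q"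
  shows "i < n \<Longrightarrow> chop n A xs (mvj n P w) i = mvj n P (chop n B xs w) i"
proof (induction xs arbitrary: i)
  case Nil then show ?case by simp
next
  case (Cons e xs)
  have "chop n A (e # xs) (mvj n P w) i = Lop n A e (chop n A xs (mvj n P w)) i" by simp
  also have "\<dots> = Lop n A e (mvj n P (chop n B xs w)) i"
    by (rule Lop_cong) (use Cons in auto)
  also have "\<dots> = mvj n P (Lop n B e (chop n B xs w)) i"
    by (rule transfer_Lop[OF P B Q QP A Cons(2)])
  finally show ?case by simp
qed

lemma triangular_kill:
  assumes B: "B \<in> carrier_mat n n" and ut: "upper_triangular B"
    and diag: "\<And>k. k < n \<Longrightarrow> B $$ (k,k) = es ! k" and len: "length es = n"
  shows "m \<le> n \<Longrightarrow> (\<And>j. m \<le> j \<Longrightarrow> j < n \<Longrightarrow> w j = 0) \<Longrightarrow> i < n \<Longrightarrow> chop n B (take m es) w i = 0"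
proof (induction m arbitrary: w i)
  case 0 then show ?case by simp
next
  case (Suc m)
  have lt0: "B $$ (i', j) = 0" if "i' < n" "j < i'" for i' j
    using ut that B unfolding upper_triangular_def by auto
  have tk: "take (Suc m) es = take m es @ [es ! m]"
    using Suc(2) len by (simp add: take_Suc_conv_app_nth)
  define w' where "w' = Lop n B (es ! m) w"
  have w'0: "w' j = 0" if "m \<le> j" "j < n" for j
  proof -
    have "w' j = (\<Sum>k<n. B $$ (j,k) * w k) - es ! m * w j"
      unfolding w'_def Lop_def mvj_def by simp
    also have "(\<Sum>k<n. B $$ (j,k) * w k) = (\<Sum>k<n. if k = j then B $$ (j,j) * w j else 0)"
    proof (intro sum.cong refl)
      fix k assume k: "k \<in> {..<n}"
      show "B $$ (j,k) * w k = (if k = j then B $$ (j,j) * w j else 0)"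
      proof (cases "k < j")
        case True then show ?thesis using lt0[OF that(2) True] by simp
      next
        case False
        then show ?thesis using Suc(3)[of k] that k by auto
      qed
    qed
    also have "\<dots> = B $$ (j,j) * w j" using that by (simp add: sum.delta)
    finally have eq: "w' j = B $$ (j,j) * w j - es ! m * w j" .
    show ?thesis
    proof (cases "j = m")
      case True then show ?thesis using eq diag that by simp
    next
      case False then have "w j = 0" using Suc(3) that by simp
      then show ?thesis using eq by simp
    qed
  qed
  have "chop n B (take (Suc m) es) w i = chop n B (take m es) w' i"
    unfolding tk chop_append w'_def by simp
  also have "\<dots> = 0" using Suc.IH[of w' i] w'0 Suc(2,4) by simp
  finally show ?case .
qed

lemma rank_one_kill:
  assumes A: "A \<in> carrier_mat n n" and n: "n \<ge> 1"
    and cp: "char_poly A = (\<Prod>e\<leftarrow>xs @ [\<mu>]. [:- e, 1:])"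
  shows "\<exists>q. \<forall>z. ipn n q z = 0 \<longrightarrow> (\<forall>i<n. chop n A xs z i = 0)"
proof -
  define es where "es = xs @ [\<mu>]"
  obtain B P Q where sch: "schur_decomposition A es = (B, P, Q)"
    by (cases "schur_decomposition A es") auto
  from schur_decomposition[OF A cp[folded es_def] sch]
  have sw: "similar_mat_wit A B P Q" and ut: "upper_triangular B" and dg: "diag_mat B = es"
    by auto
  note sd = similar_mat_witD2[OF A sw]
  have P: "P \<in> carrier_mat n n" and B: "B \<in> carrier_mat n n" and Q: "Q \<in> carrier_mat n n"
    and PQ: "P * Q = 1\<^sub>m n" and QP: "Q * P = 1\<^sub>m n" and AE: "A = P * B * Q"
    using sd by auto
  have len: "length es = n" using dg B unfolding diag_mat_def by auto
  have diag: "B $$ (k,k) = es ! k" if "k < n" for k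
  proof -
    have "dim_row B = n" using B by simp
    then have "diag_mat B ! k = B $$ (k,k)" using that unfolding diag_mat_def by simp
    then show ?thesis using dg by simp
  qed
  have tk: "take (n - 1) es = xs" using len unfolding es_def by simp
  define q where "q = (\<lambda>j. Q $$ (n - 1, j))"
  show ?thesis
  proof (intro exI allI impI)
    fix z i assume qz: "ipn n q z = 0" and i: "i < n"
    define w where "w = mvj n Q z"
    have w0: "w j = 0" if "n - 1 \<le> j" "j < n" for j
    proof -
      have "j = n - 1" using that by simp
      then show ?thesis using qz unfolding w_def mvj_def q_def ipn_def by simp
    qed
    have zz: "z j = mvj n P w j" if "j < n" for j
      using mvj_mult[OF P Q that, of z] PQ mvj_one[OF that] unfolding w_def by simp
    have "chop n A xs z i = chop n A xs (mvj n P w) i"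
      by (rule chop_cong) (use zz i in auto)
    also have "\<dots> = mvj n P (chop n B xs w) i"
      by (rule transfer_chop[OF P B Q QP AE i])
    also have "mvj n P (chop n B xs w) = mvj n P (\<lambda>_. 0)"
    proof (rule mvj_cong)
      fix j assume j: "j < n"
      show "chop n B xs w j = 0"
        using triangular_kill[OF B ut diag len, of "n - 1" w j] w0 j tk by simp
    qed
    also have "mvj n P (\<lambda>_. 0) i = 0" by (simp add: mvj_def)
    finally show "chop n A xs z i = 0" .
  qed
qed


section \<open>Symmetric matrices\<close>

lemma ipn_mvj_sym:
  assumes sym: "\<And>i j. i < n \<Longrightarrow> j < n \<Longrightarrow> A $$ (i,j) = A $$ (j,i)"
  shows "ipn n v (mvj n A w) = ipn n (mvj n A v) w"
proof -
  have "ipn n v (mvj n A w) = (\<Sum>i<n. \<Sum>j<n. v i * A $$ (i,j) * w j)"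
    unfolding ipn_def mvj_def by (simp add: sum_distrib_left mult.assoc)
  also have "\<dots> = (\<Sum>j<n. \<Sum>i<n. v i * A $$ (i,j) * w j)" by (rule sum.swap)
  also have "\<dots> = (\<Sum>j<n. \<Sum>i<n. A $$ (j,i) * v i * w j)"
    by (intro sum.cong refl) (simp add: sym mult.commute)
  also have "\<dots> = ipn n (mvj n A v) w"
    unfolding ipn_def mvj_def by (simp add: sum_distrib_right)
  finally show ?thesis .
qed

lemma ipn_Lop_sym:
  assumes sym: "\<And>i j. i < n \<Longrightarrow> j < n \<Longrightarrow> A $$ (i,j) = A $$ (j,i)"
  shows "ipn n v (Lop n A e w) = ipn n (Lop n A e v) w"
proof -
  have "ipn n v (Lop n A e w) = ipn n v (mvj n A w) - e * ipn n v w"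
    unfolding ipn_def Lop_def by (simp add: right_diff_distrib sum_subtractf sum_distrib_left algebra_simps)
  also have "\<dots> = ipn n (mvj n A v) w - e * ipn n v w" using ipn_mvj_sym[OF sym] by simp
  also have "\<dots> = ipn n (Lop n A e v) w"
    unfolding ipn_def Lop_def by (simp add: left_diff_distrib sum_subtractf sum_distrib_left algebra_simps)
  finally show ?thesis .
qed

lemma ipn_self_zero:
  assumes "ipn n y y = 0" "i < n" shows "y i = 0"
proof -
  have "(\<Sum>j<n. y j * y j) = 0" using assms(1) unfolding ipn_def .
  then have "\<forall>j\<in>{..<n}. y j * y j = 0"
    by (subst sum_nonneg_eq_0_iff[symmetric]) auto
  then show ?thesis using assms(2) by auto
qed

lemma sq_kill:
  assumes sym: "\<And>i j. i < n \<Longrightarrow> j < n \<Longrightarrow> A $$ (i,j) = A $$ (j,i)"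
    and h: "\<And>i. i < n \<Longrightarrow> Lop n A e (Lop n A e y) i = 0" and i: "i < n"
  shows "Lop n A e y i = 0"
proof -
  have "ipn n (Lop n A e y) (Lop n A e y) = ipn n y (Lop n A e (Lop n A e y))"
    using ipn_Lop_sym[OF sym] by simp
  also have "\<dots> = ipn n y (\<lambda>_. 0)" by (rule ipn_cong) (use h in auto)
  also have "\<dots> = 0" by (simp add: ipn_def)
  finally show ?thesis using ipn_self_zero i by blast
qed

lemma rep_kill:
  assumes sym: "\<And>i j. i < n \<Longrightarrow> j < n \<Longrightarrow> A $$ (i,j) = A $$ (j,i)"
  shows "(\<And>i. i < n \<Longrightarrow> chop n A (replicate k e) y i = 0) \<Longrightarrow> i < n \<Longrightarrow> Lop n A e y i = 0"
proof (induction k arbitrary: y i)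
  case 0
  then have "Lop n A e y i = Lop n A e (\<lambda>_. 0) i" by (intro Lop_cong) auto
  then show ?case by (simp add: Lop_def mvj_def)
next
  case (Suc k)
  have eq: "chop n A (replicate (Suc k) e) y = chop n A (replicate k e) (Lop n A e y)"
    by (simp add: chop_Lop_comm)
  have "Lop n A e (Lop n A e y) j = 0" if "j < n" for j
    using Suc.IH[of "Lop n A e y" j] Suc.prems that eq by simp
  then show ?case using sq_kill[OF sym _ Suc.prems(2)] by blast
qed

lemma chain_kill:
  assumes sym: "\<And>i j. i < n \<Longrightarrow> j < n \<Longrightarrow> A $$ (i,j) = A $$ (j,i)"
    and h: "\<And>i. i < n \<Longrightarrow> chop n A (replicate b e1 @ replicate c e2 @ [l]) z i = 0"
  shows "i < n \<Longrightarrow> Lop n A e2 (Lop n A e1 (Lop n A l z)) i = 0"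
proof -
  assume i: "i < n"
  define y where "y = chop n A (replicate c e2) (Lop n A l z)"
  have "chop n A (replicate b e1) y j = 0" if "j < n" for j
    using h[OF that] unfolding y_def chop_append by simp
  then have "Lop n A e1 y j = 0" if "j < n" for j using rep_kill[OF sym] that by blast
  then have "chop n A (replicate c e2) (Lop n A e1 (Lop n A l z)) j = 0" if "j < n" for j
    using that unfolding y_def chop_Lop_comm by simp
  then show ?thesis using rep_kill[OF sym] i by blast
qed

lemma frac3: fixes x y z d1 d2 d3 :: real
  assumes "d1 \<noteq> 0" "d2 \<noteq> 0" "d3 \<noteq> 0" "x * d2 * d3 + y * d1 * d3 + z * d1 * d2 = r * (d1 * d2 * d3)"
  shows "r = x / d1 + y / d2 + z / d3"
  using assms by (simp add: field_simps)

lemma lagrange_id: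
  fixes l1 l2 l3 p q r :: real
  assumes "l1 \<noteq> l2" "l1 \<noteq> l3" "l2 \<noteq> l3"
  shows "r = (p - (l2 + l3) * q + l2 * l3 * r) / ((l1 - l2) * (l1 - l3))
           + (p - (l1 + l3) * q + l1 * l3 * r) / ((l2 - l1) * (l2 - l3))
           + (p - (l1 + l2) * q + l1 * l2 * r) / ((l3 - l1) * (l3 - l2))"
  apply (rule frac3)
  using assms apply simp_all
  apply (simp add: algebra_simps)
  done

lemma LL_expand: "Lop n A e (Lop n A f z) = (\<lambda>i. mvj n A (mvj n A z) i - (e + f) * mvj n A z i + e * f * z i)"
  unfolding Lop_def mvj_diff mvj_scale by (simp add: algebra_simps)

lemma orth_eig:
  assumes sym: "\<And>i j. i < n \<Longrightarrow> j < n \<Longrightarrow> A $$ (i,j) = A $$ (j,i)"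
    and u: "\<And>i. i < n \<Longrightarrow> mvj n A u i = a * u i" and v: "\<And>i. i < n \<Longrightarrow> mvj n A v i = b * v i"
    and ab: "a \<noteq> b"
  shows "ipn n u v = 0"
proof -
  have "ipn n u (mvj n A v) = ipn n u (\<lambda>i. b * v i)" by (rule ipn_cong) (use v in auto)
  also have "\<dots> = b * ipn n u v" unfolding ipn_def by (simp add: sum_distrib_left algebra_simps)
  finally have 1: "ipn n u (mvj n A v) = b * ipn n u v" .
  have "ipn n (mvj n A u) v = ipn n (\<lambda>i. a * u i) v" by (rule ipn_cong) (use u in auto)
  also have "\<dots> = a * ipn n u v" unfolding ipn_def by (simp add: sum_distrib_left algebra_simps)
  finally have 2: "ipn n (mvj n A u) v = a * ipn n u v" .
  from 1 2 ipn_mvj_sym[OF sym] have "(a - b) * ipn n u v = 0" by (simp add: algebra_simps)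
  then show ?thesis using ab by simp
qed


lemma decomp_form:
  assumes sym: "\<And>i j. i < n \<Longrightarrow> j < n \<Longrightarrow> A $$ (i,j) = A $$ (j,i)"
    and d: "l1 \<noteq> l2" "l1 \<noteq> l3" "l2 \<noteq> l3"
    and h: "\<And>i. i < n \<Longrightarrow> Lop n A l1 (Lop n A l2 (Lop n A l3 z)) i = 0"
  shows "\<exists>a1 a2 a3. ipn n z (Lop n A t z) =
     (l1 - t) * ipn n a1 a1 + (l2 - t) * ipn n a2 a2 + (l3 - t) * ipn n a3 a3"
proof -
  define c1 where "c1 = 1 / ((l1 - l2) * (l1 - l3))"
  define c2 where "c2 = 1 / ((l2 - l1) * (l2 - l3))"
  define c3 where "c3 = 1 / ((l3 - l1) * (l3 - l2))"
  define a1 where "a1 = (\<lambda>i. c1 * Lop n A l2 (Lop n A l3 z) i)"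
  define a2 where "a2 = (\<lambda>i. c2 * Lop n A l1 (Lop n A l3 z) i)"
  define a3 where "a3 = (\<lambda>i. c3 * Lop n A l1 (Lop n A l2 z) i)"
  have zsum: "z = (\<lambda>i. a1 i + a2 i + a3 i)"
  proof
    fix i
    show "z i = a1 i + a2 i + a3 i"
      unfolding a1_def a2_def a3_def c1_def c2_def c3_def LL_expand
      using lagrange_id[OF d, of "z i" "mvj n A (mvj n A z) i" "mvj n A z i"] by simp
  qed
  have k1: "Lop n A l1 a1 i = 0" if "i < n" for i
    unfolding a1_def Lop_scale using h[OF that] by simp
  have k2: "Lop n A l2 a2 i = 0" if "i < n" for i
    unfolding a2_def Lop_scale using h[OF that] by (simp add: Lop_comm)
  have k3: "Lop n A l3 a3 i = 0" if "i < n" for i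
  proof -
    have "Lop n A l3 (Lop n A l1 (Lop n A l2 z)) = Lop n A l1 (Lop n A l2 (Lop n A l3 z))"
      by (metis Lop_comm)
    then show ?thesis unfolding a3_def Lop_scale using h[OF that] by simp
  qed
  have e1: "mvj n A a1 i = l1 * a1 i" if "i < n" for i using k1[OF that] by (simp add: Lop_def)
  have e2: "mvj n A a2 i = l2 * a2 i" if "i < n" for i using k2[OF that] by (simp add: Lop_def)
  have e3: "mvj n A a3 i = l3 * a3 i" if "i < n" for i using k3[OF that] by (simp add: Lop_def)
  have o12: "ipn n a1 a2 = 0" by (rule orth_eig[OF sym e1 e2 d(1)])
  have o13: "ipn n a1 a3 = 0" by (rule orth_eig[OF sym e1 e3 d(2)])
  have o23: "ipn n a2 a3 = 0" by (rule orth_eig[OF sym e2 e3 d(3)])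
  have Lz: "Lop n A t z i = (l1 - t) * a1 i + (l2 - t) * a2 i + (l3 - t) * a3 i" if "i < n" for i
  proof -
    have "mvj n A z i = mvj n A a1 i + mvj n A a2 i + mvj n A a3 i"
      by (subst zsum) (simp add: mvj_add)
    then show ?thesis using e1[OF that] e2[OF that] e3[OF that] zsum
      by (simp add: Lop_def algebra_simps)
  qed
  have "ipn n z (Lop n A t z) = ipn n (\<lambda>i. a1 i + a2 i + a3 i) (\<lambda>i. (l1 - t) * a1 i + (l2 - t) * a2 i + (l3 - t) * a3 i)"
    by (rule ipn_cong) (use zsum Lz in auto)
  also have "\<dots> = (\<Sum>i<n. (l1 - t) * (a1 i * a1 i) + (l2 - t) * (a2 i * a2 i) + (l3 - t) * (a3 i * a3 i)
        + (l1 + l2 - 2 * t) * (a1 i * a2 i) + (l1 + l3 - 2 * t) * (a1 i * a3 i) + (l2 + l3 - 2 * t) * (a2 i * a3 i))"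
    unfolding ipn_def by (intro sum.cong refl) (simp add: algebra_simps)
  also have "\<dots> = (l1 - t) * ipn n a1 a1 + (l2 - t) * ipn n a2 a2 + (l3 - t) * ipn n a3 a3
        + (l1 + l2 - 2 * t) * ipn n a1 a2 + (l1 + l3 - 2 * t) * ipn n a1 a3 + (l2 + l3 - 2 * t) * ipn n a2 a3"
    unfolding ipn_def by (simp add: sum.distrib sum_distrib_left)
  also have "\<dots> = (l1 - t) * ipn n a1 a1 + (l2 - t) * ipn n a2 a2 + (l3 - t) * ipn n a3 a3"
    using o12 o13 o23 by simp
  finally show ?thesis by blast
qed

lemma ipn_self_nonneg: "0 \<le> ipn n a a"
  unfolding ipn_def by (intro sum_nonneg) auto


section \<open>Spectral core\<close>

lemma adj_carrier: "adj_matrix n E \<in> carrier_mat n n"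
  unfolding adj_matrix_def by simp

lemma adj_entry: "i < n \<Longrightarrow> j < n \<Longrightarrow> adj_matrix n E $$ (i,j) = (if E i j then 1 else 0)"
  unfolding adj_matrix_def by simp

lemma adj_sym: "simple_graph n E \<Longrightarrow> i < n \<Longrightarrow> j < n \<Longrightarrow> adj_matrix n E $$ (i,j) = adj_matrix n E $$ (j,i)"
  unfolding adj_entry simple_graph_def by (auto simp: adj_entry)

lemma M_split:
  assumes "set_mset M \<subseteq> {2, -1::real}"
  shows "M = replicate_mset (count M 2) 2 + replicate_mset (count M (-1)) (-1)"
proof (rule multiset_eqI)
  fix x
  show "count M x = count (replicate_mset (count M 2) 2 + replicate_mset (count M (-1)) (-1)) x"
  proof (cases "x = 2 \<or> x = -1")
    case True then show ?thesis by auto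
  next
    case False
    then have "x \<notin># M" using assms by auto
    then have "count M x = 0" by (simp add: count_eq_zero_iff)
    then show ?thesis using False by auto
  qed
qed

lemma cp_list:
  assumes "has_spectrum n E ({#r, s#} + M)" and "set_mset M \<subseteq> {2, -1}"
    and "mset es = {#r, s#} + M"
  shows "char_poly (adj_matrix n E) = (\<Prod>e\<leftarrow>es. [:- e, 1:])"
proof -
  have "char_poly (adj_matrix n E) = (\<Prod>x\<in>#({#r, s#} + M). [:- x, 1:])"
    using assms(1) unfolding has_spectrum_def by simp
  also have "\<dots> = (\<Prod>x\<in># mset es. [:- x, 1:])" using assms(3) by simp
  also have "\<dots> = (\<Prod>e\<leftarrow>es. [:- e, 1:])" by (metis prod_mset_prod_list mset_map)
  finally show ?thesis .
qed

lemma ipn_lin: "ipn n q (\<lambda>i. a * v i + b * w i) = a * ipn n q v + b * ipn n q w"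
proof -
  have "ipn n q (\<lambda>i. a * v i + b * w i) = (\<Sum>i<n. a * (q i * v i) + b * (q i * w i))"
    unfolding ipn_def by (intro sum.cong refl) (simp add: algebra_simps)
  also have "\<dots> = a * ipn n q v + b * ipn n q w"
    unfolding ipn_def by (simp add: sum.distrib sum_distrib_left)
  finally show ?thesis .
qed

lemma two_comb:
  "\<exists>\<alpha> \<beta>. (\<alpha> \<noteq> 0 \<or> \<beta> \<noteq> 0) \<and> ipn n q (\<lambda>i. \<alpha> * z1 i + \<beta> * z2 i) = 0"
proof (cases "ipn n q z2 = 0")
  case True
  then show ?thesis by (intro exI[of _ 0] exI[of _ 1]) simp
next
  case False
  have "ipn n q (\<lambda>i. ipn n q z2 * z1 i + (- ipn n q z1) * z2 i) = ipn n q z2 * ipn n q z1 + (- ipn n q z1) * ipn n q z2"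
    by (rule ipn_lin)
  then show ?thesis using False by (intro exI[of _ "ipn n q z2"] exI[of _ "- ipn n q z1"]) simp
qed

lemma spectral_core:
  assumes F: "in_F n E" and mu: "\<mu> = r \<or> \<mu> = s"
    and rs: "r > 2" "s < -1" "set_mset M \<subseteq> {2, -1}" "has_spectrum n E ({#r, s#} + M)"
    and l: "l = (if \<mu> = s then r else s)"
  shows "\<exists>\<alpha> \<beta>. (\<alpha> \<noteq> 0 \<or> \<beta> \<noteq> 0) \<and>
     (\<exists>a1 a2 a3. ipn n (\<lambda>i. \<alpha> * z1 i + \<beta> * z2 i) (Lop n (adj_matrix n E) t (\<lambda>i. \<alpha> * z1 i + \<beta> * z2 i)) =
     (-1 - t) * ipn n a1 a1 + (2 - t) * ipn n a2 a2 + (l - t) * ipn n a3 a3)"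
proof -
  let ?A = "adj_matrix n E"
  have sg: "simple_graph n E" and n: "n \<ge> 1" using F unfolding in_F_def connected_graph_def by auto
  have sym: "\<And>i j. i < n \<Longrightarrow> j < n \<Longrightarrow> ?A $$ (i,j) = ?A $$ (j,i)" using adj_sym[OF sg] by blast
  define b where "b = count M 2"
  define c where "c = count M (-1)"
  define xs where "xs = replicate b 2 @ replicate c (-1) @ [l]"
  have ms: "mset (xs @ [\<mu>]) = {#r, s#} + M"
    using M_split[OF rs(3)] mu l rs(1,2) unfolding xs_def b_def c_def
    by (auto simp: add_mset_commute)
  have cp: "char_poly ?A = (\<Prod>e\<leftarrow>xs @ [\<mu>]. [:- e, 1:])"
    by (rule cp_list[OF rs(4) rs(3) ms])
  obtain q where q: "\<And>z. ipn n q z = 0 \<Longrightarrow> (\<forall>i<n. chop n ?A xs z i = 0)"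
    using rank_one_kill[OF adj_carrier n cp] by blast
  obtain \<alpha> \<beta> where ab: "\<alpha> \<noteq> 0 \<or> \<beta> \<noteq> 0" and qz: "ipn n q (\<lambda>i. \<alpha> * z1 i + \<beta> * z2 i) = 0"
    using two_comb by blast
  define z where "z = (\<lambda>i. \<alpha> * z1 i + \<beta> * z2 i)"
  have "\<forall>i<n. chop n ?A xs z i = 0" using q qz unfolding z_def by blast
  then have k: "Lop n ?A (-1) (Lop n ?A 2 (Lop n ?A l z)) i = 0" if "i < n" for i
    using chain_kill[OF sym _ that, of b 2 c "-1" l z] unfolding xs_def by blast
  have d: "-1 \<noteq> (2::real)" "-1 \<noteq> l" "2 \<noteq> l" using l rs(1,2) by auto
  show ?thesis using decomp_form[OF sym d k, of t] ab unfolding z_def by blast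
qed

lemma neg_core:
  assumes F: "in_F n E"
  shows "\<exists>\<alpha> \<beta>. (\<alpha> \<noteq> 0 \<or> \<beta> \<noteq> 0) \<and>
     0 \<le> ipn n (\<lambda>i. \<alpha> * z1 i + \<beta> * z2 i) (Lop n (adj_matrix n E) (-1) (\<lambda>i. \<alpha> * z1 i + \<beta> * z2 i))"
proof -
  obtain r s M where rs: "r > 2" "s < -1" "set_mset M \<subseteq> {2, -1}" "has_spectrum n E ({#r, s#} + M)"
    using F unfolding in_F_def by blast
  from spectral_core[OF F _ rs refl, of s z1 z2 "-1"] rs(1,2)
  obtain \<alpha> \<beta> a1 a2 a3 where ab: "\<alpha> \<noteq> 0 \<or> \<beta> \<noteq> 0" and
    eq: "ipn n (\<lambda>i. \<alpha> * z1 i + \<beta> * z2 i) (Lop n (adj_matrix n E) (-1) (\<lambda>i. \<alpha> * z1 i + \<beta> * z2 i)) =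
     (-1 - -1) * ipn n a1 a1 + (2 - -1) * ipn n a2 a2 + (r - -1) * ipn n a3 a3" by auto
  have "0 \<le> (-1 - -1) * ipn n a1 a1 + (2 - -1) * ipn n a2 a2 + (r - -1) * ipn n a3 a3"
    using rs(1) ipn_self_nonneg[of n a2] ipn_self_nonneg[of n a3] by simp
  then show ?thesis using ab eq by metis
qed

lemma pos_core:
  assumes F: "in_F n E"
  shows "\<exists>\<alpha> \<beta>. (\<alpha> \<noteq> 0 \<or> \<beta> \<noteq> 0) \<and>
     ipn n (\<lambda>i. \<alpha> * z1 i + \<beta> * z2 i) (Lop n (adj_matrix n E) 2 (\<lambda>i. \<alpha> * z1 i + \<beta> * z2 i)) \<le> 0"
proof -
  obtain r s M where rs: "r > 2" "s < -1" "set_mset M \<subseteq> {2, -1}" "has_spectrum n E ({#r, s#} + M)"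
    using F unfolding in_F_def by blast
  from spectral_core[OF F _ rs refl, of r z1 z2 2] rs(1,2)
  obtain \<alpha> \<beta> a1 a2 a3 where ab: "\<alpha> \<noteq> 0 \<or> \<beta> \<noteq> 0" and
    eq: "ipn n (\<lambda>i. \<alpha> * z1 i + \<beta> * z2 i) (Lop n (adj_matrix n E) 2 (\<lambda>i. \<alpha> * z1 i + \<beta> * z2 i)) =
     (-1 - 2) * ipn n a1 a1 + (2 - 2) * ipn n a2 a2 + (s - 2) * ipn n a3 a3" by auto
  have "(-1 - 2) * ipn n a1 a1 + (2 - 2) * ipn n a2 a2 + (s - 2) * ipn n a3 a3 \<le> 0"
  proof -
    have "(s - 2) * ipn n a3 a3 \<le> 0"
      by (rule mult_nonpos_nonneg) (use rs(2) ipn_self_nonneg[of n a3] in auto)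
    then show ?thesis using ipn_self_nonneg[of n a1] by simp
  qed
  then show ?thesis using ab eq by metis
qed




lemma form_local:
  assumes S: "S \<subseteq> {..<n}" and z: "\<And>i. i < n \<Longrightarrow> i \<notin> S \<Longrightarrow> z i = 0"
  shows "ipn n z (Lop n M t z) = (\<Sum>i\<in>S. z i * ((\<Sum>j\<in>S. M $$ (i,j) * z j) - t * z i))"
proof -
  have fin: "finite S" using S finite_subset by blast
  have inner: "mvj n M z i = (\<Sum>j\<in>S. M $$ (i,j) * z j)" for i
    unfolding mvj_def by (rule sum.mono_neutral_right) (use S z fin in auto)
  have "ipn n z (Lop n M t z) = (\<Sum>i<n. z i * ((\<Sum>j\<in>S. M $$ (i,j) * z j) - t * z i))"
    unfolding ipn_def Lop_def inner ..
  also have "\<dots> = (\<Sum>i\<in>S. z i * ((\<Sum>j\<in>S. M $$ (i,j) * z j) - t * z i))"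
    by (rule sum.mono_neutral_right) (use S z fin in auto)
  finally show ?thesis .
qed

lemma no_P3_local:
  assumes F: "in_F n E"
    and lt: "u < n" "v < n" "w < n" "x < n" "y < n"
    and d: "distinct [u, v, w, x, y]"
    and e: "E u v" "E v w" "\<not> E u w" "E u x" "E v x" "E w x" "E x y" "\<not> E u y" "\<not> E v y" "\<not> E w y"
  shows False
proof -
  have sg: "simple_graph n E" using F unfolding in_F_def by auto
  have sy: "E a b \<Longrightarrow> E b a" for a b using sg unfolding simple_graph_def by blast
  have irr: "\<not> E a a" for a using sg unfolding simple_graph_def by blast
  have e2: "E v u" "E w v" "\<not> E w u" "E x u" "E x v" "E x w" "E y x" "\<not> E y u" "\<not> E y v" "\<not> E y w"
    using e sy by blast+
  have neq: "u \<noteq> v" "u \<noteq> w" "u \<noteq> x" "u \<noteq> y" "v \<noteq> w" "v \<noteq> x" "v \<noteq> y" "w \<noteq> x" "w \<noteq> y" "x \<noteq> y"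
    "v \<noteq> u" "w \<noteq> u" "x \<noteq> u" "y \<noteq> u" "w \<noteq> v" "x \<noteq> v" "y \<noteq> v" "x \<noteq> w" "y \<noteq> w" "y \<noteq> x"
    using d by auto
  define z1 where "z1 = (\<lambda>i. if i = v then 1 else if i = u then -1 else if i = w then -1 else (0::real))"
  define z2 where "z2 = (\<lambda>i. if i = x then 1 else if i = v then -1 else if i = y then -1 else (0::real))"
  obtain \<alpha> \<beta> where ab: "\<alpha> \<noteq> 0 \<or> \<beta> \<noteq> 0" and
    ge: "0 \<le> ipn n (\<lambda>i. \<alpha> * z1 i + \<beta> * z2 i) (Lop n (adj_matrix n E) (-1) (\<lambda>i. \<alpha> * z1 i + \<beta> * z2 i))"
    using neg_core[OF F, of z1 z2] by blast
  let ?S = "{u, v, w, x, y}"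
  have S: "?S \<subseteq> {..<n}" using lt by auto
  have zs: "\<And>i. i < n \<Longrightarrow> i \<notin> ?S \<Longrightarrow> \<alpha> * z1 i + \<beta> * z2 i = 0"
    unfolding z1_def z2_def by auto
  note ent = adj_entry[OF lt(1) lt(1)] adj_entry[OF lt(1) lt(2)] adj_entry[OF lt(1) lt(3)] adj_entry[OF lt(1) lt(4)] adj_entry[OF lt(1) lt(5)]
    adj_entry[OF lt(2) lt(1)] adj_entry[OF lt(2) lt(2)] adj_entry[OF lt(2) lt(3)] adj_entry[OF lt(2) lt(4)] adj_entry[OF lt(2) lt(5)]
    adj_entry[OF lt(3) lt(1)] adj_entry[OF lt(3) lt(2)] adj_entry[OF lt(3) lt(3)] adj_entry[OF lt(3) lt(4)] adj_entry[OF lt(3) lt(5)]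
    adj_entry[OF lt(4) lt(1)] adj_entry[OF lt(4) lt(2)] adj_entry[OF lt(4) lt(3)] adj_entry[OF lt(4) lt(4)] adj_entry[OF lt(4) lt(5)]
    adj_entry[OF lt(5) lt(1)] adj_entry[OF lt(5) lt(2)] adj_entry[OF lt(5) lt(3)] adj_entry[OF lt(5) lt(4)] adj_entry[OF lt(5) lt(5)]
  have "ipn n (\<lambda>i. \<alpha> * z1 i + \<beta> * z2 i) (Lop n (adj_matrix n E) (-1) (\<lambda>i. \<alpha> * z1 i + \<beta> * z2 i))
      = - (\<alpha> * \<alpha>) - \<beta> * \<beta>"
    apply (subst form_local[OF S, of "\<lambda>i. \<alpha> * z1 i + \<beta> * z2 i"])
    using zs apply blast
    using e e2 irr unfolding z1_def z2_def by (simp add: ent neq algebra_simps)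
  with ge have "\<alpha> * \<alpha> + \<beta> * \<beta> \<le> 0" by simp
  moreover have "0 < \<alpha> * \<alpha> + \<beta> * \<beta>" using ab
    by (simp add: sum_squares_gt_zero_iff)
  ultimately show False by simp
qed


lemma no_tri_local:
  assumes F: "in_F n E"
    and lt: "u < n" "v < n" "w < n" "x < n" "y1 < n" "y2 < n" "y3 < n" "y4 < n"
    and d: "distinct [u, v, w, x, y1, y2, y3, y4]"
    and e: "E u v" "E u w" "E v w" "E u x" "E v x" "E w x" "E x y1" "E x y2" "E x y3" "E x y4" "E y1 y2" "E y1 y3" "E y1 y4" "E y2 y3" "E y2 y4" "E y3 y4" "\<not> E u y1" "\<not> E u y2" "\<not> E u y3" "\<not> E u y4" "\<not> E v y1" "\<not> E v y2" "\<not> E v y3" "\<not> E v y4" "\<not> E w y1" "\<not> E w y2" "\<not> E w y3" "\<not> E w y4"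
  shows False
proof -
  have sg: "simple_graph n E" using F unfolding in_F_def by auto
  have sy: "E a b \<Longrightarrow> E b a" for a b using sg unfolding simple_graph_def by blast
  have irr: "\<not> E a a" for a using sg unfolding simple_graph_def by blast
  have e2: "E v u" "E w u" "E w v" "E x u" "E x v" "E x w" "E y1 x" "E y2 x" "E y3 x" "E y4 x" "E y2 y1" "E y3 y1" "E y4 y1" "E y3 y2" "E y4 y2" "E y4 y3" "\<not> E y1 u" "\<not> E y2 u" "\<not> E y3 u" "\<not> E y4 u" "\<not> E y1 v" "\<not> E y2 v" "\<not> E y3 v" "\<not> E y4 v" "\<not> E y1 w" "\<not> E y2 w" "\<not> E y3 w" "\<not> E y4 w"
    using e sy by blast+
  have neq: "u \<noteq> v" "u \<noteq> w" "u \<noteq> x" "u \<noteq> y1" "u \<noteq> y2" "u \<noteq> y3" "u \<noteq> y4" "v \<noteq> u" "v \<noteq> w" "v \<noteq> x" "v \<noteq> y1" "v \<noteq> y2" "v \<noteq> y3" "v \<noteq> y4" "w \<noteq> u" "w \<noteq> v" "w \<noteq> x" "w \<noteq> y1" "w \<noteq> y2" "w \<noteq> y3" "w \<noteq> y4" "x \<noteq> u" "x \<noteq> v" "x \<noteq> w" "x \<noteq> y1" "x \<noteq> y2" "x \<noteq> y3" "x \<noteq> y4" "y1 \<noteq> u" "y1 \<noteq> v" "y1 \<noteq> w" "y1 \<noteq> x" "y1 \<noteq> y2" "y1 \<noteq> y3" "y1 \<noteq> y4" "y2 \<noteq> u" "y2 \<noteq> v" "y2 \<noteq> w" "y2 \<noteq>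 x" "y2 \<noteq> y1" "y2 \<noteq> y3" "y2 \<noteq> y4" "y3 \<noteq> u" "y3 \<noteq> v" "y3 \<noteq> w" "y3 \<noteq> x" "y3 \<noteq> y1" "y3 \<noteq> y2" "y3 \<noteq> y4" "y4 \<noteq> u" "y4 \<noteq> v" "y4 \<noteq> w" "y4 \<noteq> x" "y4 \<noteq> y1" "y4 \<noteq> y2" "y4 \<noteq> y3"
    using d by auto
  define z1 where "z1 = (\<lambda>i. if i = x then 1 else if i = y1 then 1 else if i = y2 then 1 else if i = y3 then 1 else if i = y4 then 1 else (0::real))"
  define z2 where "z2 = (\<lambda>i. if i = u then 1 else if i = v then 1 else if i = w then 1 else if i = x then 1 else (0::real))"
  obtain \<alpha> \<beta> where ab: "\<alpha> \<noteq> 0 \<or> \<beta> \<noteq> 0" and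
    le: "ipn n (\<lambda>i. \<alpha> * z1 i + \<beta> * z2 i) (Lop n (adj_matrix n E) 2 (\<lambda>i. \<alpha> * z1 i + \<beta> * z2 i)) \<le> 0"
    using pos_core[OF F, of z1 z2] by blast
  let ?S = "{u, v, w, x, y1, y2, y3, y4}"
  have S: "?S \<subseteq> {..<n}" using lt by auto
  have zs: "\<And>i. i < n \<Longrightarrow> i \<notin> ?S \<Longrightarrow> \<alpha> * z1 i + \<beta> * z2 i = 0"
    unfolding z1_def z2_def by auto
  have "ipn n (\<lambda>i. \<alpha> * z1 i + \<beta> * z2 i) (Lop n (adj_matrix n E) 2 (\<lambda>i. \<alpha> * z1 i + \<beta> * z2 i))
      = 10 * (\<alpha> * \<alpha>) + 10 * (\<alpha> * \<beta>) + 4 * (\<beta> * \<beta>)"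
    apply (subst form_local[OF S, of "\<lambda>i. \<alpha> * z1 i + \<beta> * z2 i"])
    using zs apply blast
    using e e2 irr unfolding z1_def z2_def by (simp add: adj_entry lt neq algebra_simps)
  with le have le2: "10 * (\<alpha> * \<alpha>) + 10 * (\<alpha> * \<beta>) + 4 * (\<beta> * \<beta>) \<le> 0" by simp
  have id: "10 * (\<alpha> * \<alpha>) + 10 * (\<alpha> * \<beta>) + 4 * (\<beta> * \<beta>) = 5/2 * ((2*\<alpha>+\<beta>) * (2*\<alpha>+\<beta>)) + 3/2 * (\<beta> * \<beta>)"
    by (simp add: algebra_simps)
  have "0 < 5/2 * ((2*\<alpha>+\<beta>) * (2*\<alpha>+\<beta>)) + 3/2 * (\<beta> * \<beta>)"
  proof (cases "\<beta> = 0")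
    case True then have "\<alpha> \<noteq> 0" using ab by simp
    then have "0 < \<alpha> * \<alpha>" by (metis not_real_square_gt_zero)
    then show ?thesis using True by simp
  next
    case False
    have "0 < \<beta> * \<beta>" using False by (metis not_real_square_gt_zero)
    moreover have "0 \<le> (2*\<alpha>+\<beta>) * (2*\<alpha>+\<beta>)" by simp
    ultimately show ?thesis by linarith
  qed
  then show False using le2 id by linarith
qed



lemma three_elems:
  assumes "3 \<le> card K"
  shows "\<exists>a b c. a \<in> K \<and> b \<in> K \<and> c \<in> K \<and> a \<noteq> b \<and> a \<noteq> c \<and> b \<noteq> c"
proof -
  obtain T where T: "T \<subseteq> K" "card T = 3" using obtain_subset_with_card_n[OF assms] by blast
  then obtain a b c where "T = {a, b, c}" "a \<noteq> b" "a \<noteq> c" "b \<noteq> c"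
    by (auto simp: card_Suc_eq numeral_eq_Suc)
  then show ?thesis using T by blast
qed

lemma four_elems:
  assumes "4 \<le> card K"
  shows "\<exists>a b c d. a \<in> K \<and> b \<in> K \<and> c \<in> K \<and> d \<in> K \<and> distinct [a, b, c, d]"
proof -
  obtain T where T: "T \<subseteq> K" "card T = 4" using obtain_subset_with_card_n[OF assms] by blast
  then obtain a b c d where "T = {a, b, c, d}" "distinct [a, b, c, d]"
    by (auto simp: card_Suc_eq numeral_eq_Suc)
  then show ?thesis using T by auto
qed

lemma partition_lemma:
  fixes E :: "nat \<Rightarrow> nat \<Rightarrow> bool" and S :: "nat set" and t :: nat
  assumes fin: "finite S"
    and sy: "\<And>a b. E a b \<Longrightarrow> E b a" and irr: "\<And>a. \<not> E a a"
    and tr: "\<And>a b c. a \<in> S \<Longrightarrow> b \<in> S \<Longrightarrow> c \<in> S \<Longrightarrow> E a b \<Longrightarrow> E b c \<Longrightarrow> a \<noteq> c \<Longrightarrow> E a c"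
    and cl: "\<And>K. K \<subseteq> S \<Longrightarrow> (\<forall>a\<in>K. \<forall>b\<in>K. a \<noteq> b \<longrightarrow> E a b) \<Longrightarrow> card K \<le> t"
    and t: "t \<le> 3"
  shows "\<exists>l k m. is_lK1_kK2_mK3 E S l k m \<and> (t \<le> 2 \<longrightarrow> m = 0) \<and> (t \<le> 1 \<longrightarrow> k = 0)"
proof -
  define R where "R = (\<lambda>a b. a = b \<or> E a b)"
  have Rtr: "R a c" if "a \<in> S" "b \<in> S" "c \<in> S" "R a b" "R b c" for a b c
    using that tr unfolding R_def by blast
  have Rsy: "R a b \<Longrightarrow> R b a" for a b using sy unfolding R_def by blast
  define cls where "cls = (\<lambda>a. {b \<in> S. R a b})"
  define P where "P = cls ` S"
  have self: "a \<in> cls a" if "a \<in> S" for a using that unfolding cls_def R_def by simp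
  have clsS: "cls a \<subseteq> S" for a unfolding cls_def by auto
  have cls_eq: "cls a = cls b" if "a \<in> S" "b \<in> S" "R a b" for a b
    unfolding cls_def using that Rtr Rsy by blast
  have clique: "E u v" if hyp: "B \<in> P" "u \<in> B" "v \<in> B" "u \<noteq> v" for B u v
  proof -
    obtain a where a: "a \<in> S" "B = cls a" using hyp(1) unfolding P_def by blast
    have "R a u" "R a v" "u \<in> S" "v \<in> S" using hyp a unfolding cls_def by auto
    then have "R u v" using Rtr Rsy a(1) by blast
    then show ?thesis using hyp(4) unfolding R_def by simp
  qed
  have noedge: "\<not> E u v" if hyp: "B \<in> P" "B' \<in> P" "B \<noteq> B'" "u \<in> B" "v \<in> B'" for B B' u v
  proof
    assume euv: "E u v"
    obtain a where a: "a \<in> S" "B = cls a" using hyp(1) unfolding P_def by blast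
    obtain b where b: "b \<in> S" "B' = cls b" using hyp(2) unfolding P_def by blast
    have "R a u" "R b v" "u \<in> S" "v \<in> S" using hyp a b unfolding cls_def by auto
    moreover have "R u v" using euv unfolding R_def by simp
    ultimately have "R a b" using Rtr Rsy a(1) b(1) by meson
    then show False using cls_eq a b hyp(3) by auto
  qed
  have disj: "B \<inter> B' = {}" if hyp: "B \<in> P" "B' \<in> P" "B \<noteq> B'" for B B'
  proof (rule ccontr)
    assume "B \<inter> B' \<noteq> {}"
    then obtain c where c: "c \<in> B" "c \<in> B'" by blast
    obtain a where a: "a \<in> S" "B = cls a" using hyp(1) unfolding P_def by blast
    obtain b where b: "b \<in> S" "B' = cls b" using hyp(2) unfolding P_def by blast
    have "R a c" "R b c" "c \<in> S" using c a b unfolding cls_def by auto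
    then have "R a b" using Rtr Rsy a(1) b(1) by meson
    then show False using cls_eq a b hyp(3) by auto
  qed
  have cardB: "card B \<in> {1, 2, 3} \<and> card B \<le> t" if hyp: "B \<in> P" for B
  proof -
    obtain a where a: "a \<in> S" "B = cls a" using hyp unfolding P_def by blast
    have fB: "finite B" using a clsS fin finite_subset by metis
    have "a \<in> B" using a self by simp
    then have "card B \<ge> 1" using fB by (metis One_nat_def Suc_leI card_gt_0_iff empty_iff)
    moreover have "card B \<le> t" using cl[of B] clique[OF hyp] a clsS by blast
    ultimately show ?thesis using t by auto
  qed
  have finP: "finite P" unfolding P_def using fin by simp
  have unP: "\<Union>P = S" unfolding P_def using self clsS by blast
  have isl: "is_lK1_kK2_mK3 E S (card {B\<in>P. card B = 1}) (card {B\<in>P. card B = 2}) (card {B\<in>P. card B = 3})"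
    unfolding is_lK1_kK2_mK3_def
  proof (intro exI[of _ P] conjI ballI impI refl)
    show "finite P" by (rule finP)
    show "\<Union>P = S" by (rule unP)
    show "B \<inter> B' = {}" if "B \<in> P" "B' \<in> P" "B \<noteq> B'" for B B' using disj that by blast
    show "card B \<in> {1, 2, 3}" if "B \<in> P" for B using cardB that by blast
    show "E u v" if "B \<in> P" "u \<in> B" "v \<in> B" "u \<noteq> v" for B u v using clique that by blast
    show "\<not> E u v" if "B \<in> P" "B' \<in> P" "B \<noteq> B'" "u \<in> B" "v \<in> B'" for B B' u v
      using noedge that by blast
  qed
  have m0: "t \<le> 2 \<longrightarrow> {B\<in>P. card B = 3} = {}" using cardB by fastforce
  have k0: "t \<le> 1 \<longrightarrow> {B\<in>P. card B = 2} = {}" using cardB by fastforce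
  show ?thesis using isl m0 k0 by fastforce
qed


lemma side:
  assumes F: "in_F n E" and Cmax: "max_clique n E C"
    and part: "Z \<union> W = C" "Z \<inter> W = {}" "Z \<noteq> {}" "W \<noteq> {}"
  shows "(card W = 1 \<longrightarrow> (\<exists>l. is_lK1_kK2_mK3 E (Gamma n E C Z) l 0 0)) \<and>
         (card W = 2 \<longrightarrow> (\<exists>l k. is_lK1_kK2_mK3 E (Gamma n E C Z) l k 0)) \<and>
         (card W = 3 \<longrightarrow> (\<exists>l k m. is_lK1_kK2_mK3 E (Gamma n E C Z) l k m)) \<and>
         (card W \<ge> 4 \<longrightarrow> (\<exists>l k. is_lK1_kK2_mK3 E (Gamma n E C Z) l k 0))"
proof -
  have sg: "simple_graph n E" using F unfolding in_F_def by auto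
  have sy: "E a b \<Longrightarrow> E b a" for a b using sg unfolding simple_graph_def by blast
  have irr: "\<not> E a a" for a using sg unfolding simple_graph_def by blast
  have Ccl: "is_clique n E C" and Cmx: "\<And>D. is_clique n E D \<Longrightarrow> card D \<le> card C"
    using Cmax unfolding max_clique_def by auto
  have CS: "C \<subseteq> {0..<n}" and Cadj: "\<And>a b. a \<in> C \<Longrightarrow> b \<in> C \<Longrightarrow> a \<noteq> b \<Longrightarrow> E a b"
    using Ccl unfolding is_clique_def by auto
  have finC: "finite C" using CS finite_subset by blast
  have ZC: "Z \<subseteq> C" "W \<subseteq> C" using part by auto
  have finZ: "finite Z" "finite W" using ZC finC finite_subset by auto
  define S where "S = Gamma n E C Z"
  have Sprop: "g < n \<and> g \<notin> C \<and> (\<forall>c\<in>C. E g c \<longleftrightarrow> c \<in> Z)" if "g \<in> S" for g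
  proof -
    have "g < n" "g \<notin> C" "{u \<in> C. E g u} = Z"
      using that unfolding S_def Gamma_def nbrs_in_def by auto
    then show ?thesis by auto
  qed
  have finS: "finite S"
  proof -
    have "S \<subseteq> {0..<n}" using Sprop by auto
    then show ?thesis using finite_subset by blast
  qed
  obtain x0 where x0: "x0 \<in> Z" using part(3) by blast
  obtain y0 where y0: "y0 \<in> W" using part(4) by blast
  have x0C: "x0 \<in> C" "x0 < n" using x0 ZC CS by auto
  have y0C: "y0 \<in> C" "y0 < n" "y0 \<notin> Z" using y0 ZC CS part(2) by auto
  have xy: "x0 \<noteq> y0" using x0 y0C by auto
  have tr: "E a c" if "a \<in> S" "b \<in> S" "c \<in> S" "E a b" "E b c" "a \<noteq> c" for a b c
  proof (rule ccontr)
    assume nac: "\<not> E a c"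
    have pa: "a < n" "a \<notin> C" "\<forall>c\<in>C. E a c \<longleftrightarrow> c \<in> Z" using Sprop[OF that(1)] by auto
    have pb: "b < n" "b \<notin> C" "\<forall>c\<in>C. E b c \<longleftrightarrow> c \<in> Z" using Sprop[OF that(2)] by auto
    have pc: "c < n" "c \<notin> C" "\<forall>c'\<in>C. E c c' \<longleftrightarrow> c' \<in> Z" using Sprop[OF that(3)] by auto
    have ab: "a \<noteq> b" using that(4) irr by auto
    have bc: "b \<noteq> c" using that(5) irr by auto
    have dist: "distinct [a, b, c, x0, y0]"
      using ab bc that(6) pa(2) pb(2) pc(2) x0C(1) y0C(1) xy by auto
    show False
      apply (rule no_P3_local[OF F pa(1) pb(1) pc(1) x0C(2) y0C(2) dist that(4) that(5) nac])
      using pa pb pc x0 x0C y0C Cadj[OF x0C(1) y0C(1) xy] by auto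
  qed
  have clq: "card K \<le> card W" if K: "K \<subseteq> S" "\<forall>a\<in>K. \<forall>b\<in>K. a \<noteq> b \<longrightarrow> E a b" for K
  proof -
    have finK: "finite K" using K(1) finS finite_subset by blast
    have KC: "K \<inter> C = {}" using K(1) Sprop by blast
    have "is_clique n E (Z \<union> K)"
      unfolding is_clique_def
    proof (intro conjI ballI impI)
      show "Z \<union> K \<subseteq> {0..<n}" using ZC CS K(1) Sprop by fastforce
    next
      fix a b assume a: "a \<in> Z \<union> K" and b: "b \<in> Z \<union> K" and ab: "a \<noteq> b"
      show "E a b"
      proof (cases "a \<in> Z")
        case True
        show ?thesis
        proof (cases "b \<in> Z")
          case True then show ?thesis using Cadj[of a b] \<open>a \<in> Z\<close> ab ZC by blast
        next
          case False then have "b \<in> K" using b by auto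
          then have "E b a" using Sprop K(1) \<open>a \<in> Z\<close> ZC by blast
          then show ?thesis using sy by blast
        qed
      next
        case False then have aK: "a \<in> K" using a by auto
        show ?thesis
        proof (cases "b \<in> Z")
          case True then show ?thesis using Sprop K(1) aK ZC by blast
        next
          case False then have "b \<in> K" using b by auto
          then show ?thesis using K(2) aK ab by blast
        qed
      qed
    qed
    then have "card (Z \<union> K) \<le> card C" by (rule Cmx)
    moreover have "card (Z \<union> K) = card Z + card K"
      by (rule card_Un_disjoint) (use finZ finK KC ZC in auto)
    moreover have "card C = card Z + card W"
      using part(1) card_Un_disjoint[OF finZ part(2)] by simp
    ultimately show ?thesis by simp
  qed
  have notri: False if W4: "card W \<ge> 4" and abc: "a \<in> S" "b \<in> S" "c \<in> S" "a \<noteq> b" "a \<noteq> c" "b \<noteq> c"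
    and eabc: "E a b" "E a c" "E b c" for a b c
  proof -
    obtain y1 y2 y3 y4 where ys: "y1 \<in> W" "y2 \<in> W" "y3 \<in> W" "y4 \<in> W" "distinct [y1, y2, y3, y4]"
      using four_elems[OF W4] by blast
    have yC: "y1 \<in> C" "y2 \<in> C" "y3 \<in> C" "y4 \<in> C" "y1 \<notin> Z" "y2 \<notin> Z" "y3 \<notin> Z" "y4 \<notin> Z"
      using ys ZC part(2) by auto
    have yn: "y1 < n" "y2 < n" "y3 < n" "y4 < n" using yC CS by auto
    have pa: "a < n" "a \<notin> C" "\<forall>c\<in>C. E a c \<longleftrightarrow> c \<in> Z" using Sprop[OF abc(1)] by auto
    have pb: "b < n" "b \<notin> C" "\<forall>c\<in>C. E b c \<longleftrightarrow> c \<in> Z" using Sprop[OF abc(2)] by auto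
    have pc: "c < n" "c \<notin> C" "\<forall>c'\<in>C. E c c' \<longleftrightarrow> c' \<in> Z" using Sprop[OF abc(3)] by auto
    have xyk: "x0 \<noteq> y1" "x0 \<noteq> y2" "x0 \<noteq> y3" "x0 \<noteq> y4" using x0 ys part(2) by auto
    have dist: "distinct [a, b, c, x0, y1, y2, y3, y4]"
      using abc pa(2) pb(2) pc(2) x0C(1) yC ys(5) xyk by auto
    show False
      apply (rule no_tri_local[OF F pa(1) pb(1) pc(1) x0C(2) yn dist eabc])
      using pa pb pc x0 x0C yC ys(5) xyk Cadj by auto
  qed
  have main: "\<exists>l k m. is_lK1_kK2_mK3 E S l k m \<and> (t \<le> 2 \<longrightarrow> m = 0) \<and> (t \<le> 1 \<longrightarrow> k = 0)"
    if t3: "t \<le> 3" and ct: "\<And>K. K \<subseteq> S \<Longrightarrow> (\<forall>a\<in>K. \<forall>b\<in>K. a \<noteq> b \<longrightarrow> E a b) \<Longrightarrow> card K \<le> t" for t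
    by (rule partition_lemma[OF finS sy irr tr ct t3]) auto
  have c1: "\<exists>l. is_lK1_kK2_mK3 E S l 0 0" if "card W = 1"
    using main[of 1] clq that by fastforce
  have c2: "\<exists>l k. is_lK1_kK2_mK3 E S l k 0" if "card W = 2"
    using main[of 2] clq that by fastforce
  have c3: "\<exists>l k m. is_lK1_kK2_mK3 E S l k m" if "card W = 3"
    using main[of 3] clq that by fastforce
  have c4: "\<exists>l k. is_lK1_kK2_mK3 E S l k 0" if W4: "card W \<ge> 4"
  proof -
    have "card K \<le> 2" if K: "K \<subseteq> S" "\<forall>a\<in>K. \<forall>b\<in>K. a \<noteq> b \<longrightarrow> E a b" for K
    proof (rule ccontr)
      assume "\<not> card K \<le> 2"
      then have "3 \<le> card K" by simp
      then obtain a b c where "a \<in> K" "b \<in> K" "c \<in> K" "a \<noteq> b" "a \<noteq> c" "b \<noteq> c"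
        using three_elems by blast
      then show False using notri[OF W4, of a b c] K by blast
    qed
    then show ?thesis using main[of 2] by fastforce
  qed
  show ?thesis using c1 c2 c3 c4 unfolding S_def by blast
qed

theorem proposition4p3:
  fixes n :: nat and E :: "nat \<Rightarrow> nat \<Rightarrow> bool" and C X Y :: "nat set"
  assumes F: "in_F n E"
    and Cmax: "max_clique n E C"
    and Cmin: "\<And>D. max_clique n E D \<Longrightarrow> boundary_edges n E C \<le> boundary_edges n E D"
    and part: "X \<union> Y = C" "X \<inter> Y = {}" "X \<noteq> {}" "Y \<noteq> {}"
    and nb: "\<And>v. v \<in> {0..<n} - C \<Longrightarrow> nbrs_in E v C \<in> {X, Y, {}}"
  shows
    "(card Y = 1 \<longrightarrow> (\<exists>l. is_lK1_kK2_mK3 E (Gamma n E C X) l 0 0)) \<and>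
     (card X = 1 \<longrightarrow> (\<exists>l. is_lK1_kK2_mK3 E (Gamma n E C Y) l 0 0)) \<and>
     (card Y = 2 \<longrightarrow> (\<exists>l k. is_lK1_kK2_mK3 E (Gamma n E C X) l k 0)) \<and>
     (card X = 2 \<longrightarrow> (\<exists>l k. is_lK1_kK2_mK3 E (Gamma n E C Y) l k 0)) \<and>
     (card Y = 3 \<longrightarrow> (\<exists>l k m. is_lK1_kK2_mK3 E (Gamma n E C X) l k m)) \<and>
     (card X = 3 \<longrightarrow> (\<exists>l k m. is_lK1_kK2_mK3 E (Gamma n E C Y) l k m)) \<and>
     (card Y \<ge> 4 \<longrightarrow> (\<exists>l k. is_lK1_kK2_mK3 E (Gamma n E C X) l k 0)) \<and>
     (card X \<ge> 4 \<longrightarrow> (\<exists>l k. is_lK1_kK2_mK3 E (Gamma n E C Y) l k 0))"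
proof -
  have p2: "Y \<union> X = C" "Y \<inter> X = {}" using part by auto
  note s1 = side[OF F Cmax part]
  note s2 = side[OF F Cmax p2 part(4) part(3)]
  show ?thesis using s1 s2 by blast
qed

end
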